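(* Let $n\ge 1$ and let $\mathcal{Z}=\{(\boldsymbol{z}_i,y_i)\}_{i=1}^{n}$ be a finite set of labeled representations with $\boldsymbol{z}_i\in\mathbb{R}^{d}$, $\|\boldsymbol{z}_i\|_2=1$ for all $i$, and labels $y_i\in\{1,\dots,N_C\}$, every one of the $N_C$ classes being nonempty. For each class $j$ let $\mathcal{C}_j=\{\boldsymbol{z}_i : y_i=j\}$ and let the prototype be $\boldsymbol{c}_j=\frac{1}{|\mathcal{C}_j|}\sum_{\boldsymbol{z}\in\mathcal{C}_j}\boldsymbol{z}$. Let the similarity measure $d(\cdot,\cdot)$ be the cosine similarity, and consider the nearest centroid classifier loss \[ \mathcal{L}(\theta)=-\frac{1}{n}\sum_{i=1}^{n}\log\frac{e^{d(\boldsymbol{z}_i,\boldsymbol{c}_{y_i})}}{\sum_{j=1}^{N_C}e^{d(\boldsymbol{z}_i,\boldsymbol{c}_j)}}. \] Then \[ \mathcal{L}(\theta)\ \ge\ -\frac{1}{n}\sum_{i=1}^{n}\boldsymbol{z}_i^{\top}\boldsymbol{c}_{y_i}+\frac{\alpha}{n}\sum_{i=1}^{n}\sum_{\boldsymbol{z}'\in\mathcal{Z}}\boldsymbol{z}_i^{\top}\boldsymbol{z}', \] where $\boldsymbol{z}'$ ranges over (an independent copy of) the representations in $\mathcal{Z}$, and $\alpha$ is any constant satisfying $0\le\alpha<\frac{1}{N_C|\mathcal{C}_j|}$ for all $j$.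
   Context: The representations $\boldsymbol{z}_i$ are obtained as $\boldsymbol{z}_i=h_\theta(f_{\phi^*}(\boldsymbol{x}_i))$ from a frozen backbone $f_{\phi^*}$ and a trainable head $h_\theta$ with parameters $\theta$; the loss is viewed as a function of $\theta$. In the bound, $\boldsymbol{c}_{y_i}$ denotes the prototype of the class of sample $i$. *)

theory Defs
  imports "HOL-Analysis.Analysis"
begin

definition cos_sim :: "'a::real_inner \<Rightarrow> 'a \<Rightarrow> real" where
  "cos_sim x y = inner x y / (norm x * norm y)"

definition class_idx :: "nat \<Rightarrow> (nat \<Rightarrow> nat) \<Rightarrow> nat \<Rightarrow> nat set" where
  "class_idx n y j = {i \<in> {1..n}. y i = j}"

definition prototype :: "nat \<Rightarrow> (nat \<Rightarrow> 'a::real_vector) \<Rightarrow> (nat \<Rightarrow> nat) \<Rightarrow> nat \<Rightarrow> 'a" where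
  "prototype n z y j = (1 / real (card (class_idx n y j))) *\<^sub>R (\<Sum>i\<in>class_idx n y j. z i)"

definition ncc_loss :: "nat \<Rightarrow> nat \<Rightarrow> (nat \<Rightarrow> 'a::real_inner) \<Rightarrow> (nat \<Rightarrow> nat) \<Rightarrow> real" where
  "ncc_loss n NC z y =
     - (1 / real n) * (\<Sum>i=1..n.
         ln (exp (cos_sim (z i) (prototype n z y (y i))) /
             (\<Sum>j=1..NC. exp (cos_sim (z i) (prototype n z y j)))))"

end

theory Submission
  imports Defs
begin

lemma sum_sq_le_card:
  fixes a :: "nat \<Rightarrow> real"
  assumes "finite A"
  shows "(\<Sum>j\<in>A. a j)^2 \<le> real (card A) * (\<Sum>j\<in>A. (a j)^2)"
proof -
  have "0 \<le> (\<Sum>j\<in>A. \<Sum>k\<in>A. (a j - a k)^2)"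
    by (intro sum_nonneg) auto
  also have "\<dots> = (\<Sum>j\<in>A. \<Sum>k\<in>A. (a j)^2 + (a k)^2 - 2 * (a j * a k))"
    by (intro sum.cong refl) (simp add: power2_diff)
  also have "\<dots> = 2 * (real (card A) * (\<Sum>j\<in>A. (a j)^2)) - 2 * (\<Sum>j\<in>A. a j)^2"
    by (simp add: sum.distrib sum_subtractf sum_distrib_left sum_distrib_right power2_eq_square
        sum.swap[of "\<lambda>j k. a k * a k"] algebra_simps)
  finally show ?thesis by simp
qed

theorem theorem1:
  fixes n NC :: nat and z :: "nat \<Rightarrow> real ^ 'd" and y :: "nat \<Rightarrow> nat" and \<alpha> :: real
  assumes "n \<ge> 1"
    and "\<And>i. i \<in> {1..n} \<Longrightarrow> norm (z i) = 1"
    and "\<And>i. i \<in> {1..n} \<Longrightarrow> y i \<in> {1..NC}"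
    and "\<And>j. j \<in> {1..NC} \<Longrightarrow> class_idx n y j \<noteq> {}"
    and "0 \<le> \<alpha>"
    and "\<And>j. j \<in> {1..NC} \<Longrightarrow> \<alpha> < 1 / (real NC * real (card (class_idx n y j)))"
  shows "ncc_loss n NC z y \<ge>
           - (1 / real n) * (\<Sum>i=1..n. inner (z i) (prototype n z y (y i)))
           + (\<alpha> / real n) * (\<Sum>i=1..n. \<Sum>k=1..n. inner (z i) (z k))"
proof -
  define C where "C j = class_idx n y j" for j
  define c where "c j = prototype n z y j" for j
  define S where "S = (\<Sum>k=1..n. z k)"
  have finC: "finite (C j)" for j unfolding C_def class_idx_def by auto
  have cardC: "j \<in> {1..NC} \<Longrightarrow> card (C j) > 0" for j
    using assms(4) finC unfolding C_def by (simp add: card_gt_0_iff)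
  have sC: "j \<in> {1..NC} \<Longrightarrow> real (card (C j)) *\<^sub>R c j = (\<Sum>i\<in>C j. z i)" for j
    using cardC[of j] unfolding c_def prototype_def C_def by simp
  have group: "(\<Sum>i=1..n. f i) = (\<Sum>j=1..NC. \<Sum>i\<in>C j. f i)" for f :: "nat \<Rightarrow> 'b::comm_monoid_add"
    unfolding C_def class_idx_def
    using sum.group[of "{1..n}" "{1..NC}" y f] assms(3) by (simp add: image_subset_iff)
  have NC1: "NC \<ge> 1" using assms(3)[of 1] assms(1) by auto
  have loss: "ncc_loss n NC z y \<ge> 0"
  proof -
    have "ln (exp (cos_sim (z i) (c (y i))) / (\<Sum>j=1..NC. exp (cos_sim (z i) (c j)))) \<le> 0"
      if i: "i \<in> {1..n}" for i
    proof -
      have yi: "y i \<in> {1..NC}" using assms(3) i .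
      define a where "a = exp (cos_sim (z i) (c (y i)))"
      define D where "D = (\<Sum>j=1..NC. exp (cos_sim (z i) (c j)))"
      have aD: "a \<le> D" unfolding a_def D_def
        using member_le_sum[OF yi, of "\<lambda>j. exp (cos_sim (z i) (c j))"] by simp
      have a0: "0 < a" unfolding a_def by simp
      have D0: "0 < D" using a0 aD by linarith
      have q0: "0 < a / D" using a0 D0 by simp
      have q1: "a / D \<le> 1" using aD D0 by simp
      have "ln (a / D) \<le> ln 1" using q0 q1 by (subst ln_le_cancel_iff) auto
      thus ?thesis unfolding a_def D_def by simp
    qed
    hence "(\<Sum>i=1..n. ln (exp (cos_sim (z i) (c (y i))) / (\<Sum>j=1..NC. exp (cos_sim (z i) (c j))))) \<le> 0"
      by (intro sum_nonpos) auto
    hence "(\<Sum>i=1..n. ln (exp (cos_sim (z i) (c (y i))) / (\<Sum>j=1..NC. exp (cos_sim (z i) (c j))))) / real n \<le> 0"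
      by (rule divide_nonpos_nonneg) simp
    thus ?thesis unfolding ncc_loss_def c_def
      by simp
  qed
  \<comment> \<open>RHS nonpositive\<close>
  have A: "(\<Sum>i=1..n. inner (z i) (c (y i))) = (\<Sum>j=1..NC. real (card (C j)) * (norm (c j))^2)"
  proof -
    have "(\<Sum>i=1..n. inner (z i) (c (y i))) = (\<Sum>j=1..NC. \<Sum>i\<in>C j. inner (z i) (c (y i)))"
      by (rule group)
    also have "\<dots> = (\<Sum>j=1..NC. inner (\<Sum>i\<in>C j. z i) (c j))"
      by (intro sum.cong refl) (simp add: inner_sum_left C_def class_idx_def)
    also have "\<dots> = (\<Sum>j=1..NC. real (card (C j)) * (norm (c j))^2)"
      by (intro sum.cong refl) (simp add: sC[symmetric] power2_norm_eq_inner)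
    finally show ?thesis .
  qed
  have B: "(\<Sum>i=1..n. \<Sum>k=1..n. inner (z i) (z k)) = (norm S)^2"
    by (simp add: S_def power2_norm_eq_inner inner_sum_left inner_sum_right)
       (subst sum.swap, rule refl)
  have S2: "S = (\<Sum>j=1..NC. real (card (C j)) *\<^sub>R c j)"
    unfolding S_def by (subst group) (simp add: sC)
  have "norm S \<le> (\<Sum>j=1..NC. real (card (C j)) * norm (c j))"
    unfolding S2 by (rule order_trans[OF norm_sum]) simp
  hence "(norm S)^2 \<le> (\<Sum>j=1..NC. real (card (C j)) * norm (c j))^2"
    by (simp add: power_mono)
  also have "\<dots> \<le> real NC * (\<Sum>j=1..NC. (real (card (C j)) * norm (c j))^2)"
    using sum_sq_le_card[of "{1..NC}" "\<lambda>j. real (card (C j)) * norm (c j)"] by simp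
  finally have S3: "(norm S)^2 \<le> real NC * (\<Sum>j=1..NC. (real (card (C j)) * norm (c j))^2)" .
  have "\<alpha> * (norm S)^2 \<le> \<alpha> * (real NC * (\<Sum>j=1..NC. (real (card (C j)) * norm (c j))^2))"
    using S3 assms(5) by (rule mult_left_mono)
  also have "\<dots> = (\<Sum>j=1..NC. (\<alpha> * real NC * real (card (C j))) * (real (card (C j)) * (norm (c j))^2))"
    by (simp add: sum_distrib_left power2_eq_square algebra_simps)
  also have "\<dots> \<le> (\<Sum>j=1..NC. real (card (C j)) * (norm (c j))^2)"
  proof (intro sum_mono)
    fix j assume j: "j \<in> {1..NC}"
    have "\<alpha> * (real NC * real (card (C j))) \<le> 1"
      using assms(6)[OF j] cardC[OF j] NC1
      by (simp add: C_def field_simps)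
    hence "\<alpha> * real NC * real (card (C j)) \<le> 1" by (simp add: mult.assoc)
    thus "(\<alpha> * real NC * real (card (C j))) * (real (card (C j)) * (norm (c j))^2)
          \<le> real (card (C j)) * (norm (c j))^2"
      by (intro mult_left_le_one_le) (auto simp: assms(5))
  qed
  finally have key: "\<alpha> * (norm S)^2 \<le> (\<Sum>i=1..n. inner (z i) (c (y i)))" using A by simp
  have "- (1 / real n) * (\<Sum>i=1..n. inner (z i) (c (y i))) + (\<alpha> / real n) * (norm S)^2
        = (\<alpha> * (norm S)^2 - (\<Sum>i=1..n. inner (z i) (c (y i)))) / real n"
    by (simp add: diff_divide_distrib)
  also have "\<dots> \<le> 0" using key by (simp add: divide_nonpos_nonneg)
  finally show ?thesis using loss unfolding c_def B by linarith
qed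

end
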